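(* Let $D=(V,A)$ be a digraph, $k\in\mathbb{N}$, and $\mathcal{B}_i=(V_i,A_i)$ $(i<k)$ pairwise edge-disjoint branchings in $D$ such that for every nonempty $X\subseteq V$, $\varrho_{D\setminus\!\setminus\mathcal{B}}(X)\geq|\{i<k:V_i\cap X=\varnothing\}|$. Then for every $w\in V$ there is a system of pairwise edge-disjoint paths $\{P_i\}_{i<k}$ in $D\setminus\!\setminus\mathcal{B}$ such that $P_i$ goes from $V_i$ to $w$ for each $i<k$.
   Context: Digraphs may be of arbitrary cardinality with multiple edges. A branching is a digraph whose weakly connected components are arborescences (directed trees in which every vertex is reachable from the root). $D\setminus\!\setminus\mathcal{B}=(V,A\setminus\bigcup_{i<k}A_i)$. $\varrho_H(X)$ is the cardinality of the set of edges of $H$ with tail outside $X$ and head in $X$. Paths are directed simple paths; a path $P$ goes from $X$ to $Y$ if $V(P)\cap X=\{\mathrm{start}(P)\}$ and $V(P)\cap Y=\{\mathrm{end}(P)\}$ (start and end may coincide). *)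

theory Defs
  imports Main
begin

text \<open>Digraphs with multiple edges: a vertex set V, an edge set A, and global
  incidence functions tail, head from edges to vertices.\<close>

definition joins :: "('e \<Rightarrow> 'v) \<Rightarrow> ('e \<Rightarrow> 'v) \<Rightarrow> 'e \<Rightarrow> 'v \<Rightarrow> 'v \<Rightarrow> bool" where
  "joins tail head e u v \<longleftrightarrow> (tail e = u \<and> head e = v) \<or> (tail e = v \<and> head e = u)"

definition is_digraph :: "('e \<Rightarrow> 'v) \<Rightarrow> ('e \<Rightarrow> 'v) \<Rightarrow> 'v set \<Rightarrow> 'e set \<Rightarrow> bool" where
  "is_digraph tail head V A \<longleftrightarrow> (\<forall>e\<in>A. tail e \<in> V \<and> head e \<in> V)"

definition is_path :: "('e \<Rightarrow> 'v) \<Rightarrow> ('e \<Rightarrow> 'v) \<Rightarrow> 'v set \<Rightarrow> 'e set \<Rightarrow> 'v list \<Rightarrow> 'e list \<Rightarrow> bool" where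
  "is_path tail head V A vs es \<longleftrightarrow>
     vs \<noteq> [] \<and> distinct vs \<and> set vs \<subseteq> V \<and> length vs = Suc (length es) \<and>
     (\<forall>j<length es. es ! j \<in> A \<and> tail (es ! j) = vs ! j \<and> head (es ! j) = vs ! Suc j)"

definition path_from_to :: "('e \<Rightarrow> 'v) \<Rightarrow> ('e \<Rightarrow> 'v) \<Rightarrow> 'v set \<Rightarrow> 'e set \<Rightarrow> 'v list \<Rightarrow> 'e list
    \<Rightarrow> 'v set \<Rightarrow> 'v set \<Rightarrow> bool" where
  "path_from_to tail head V A vs es X Y \<longleftrightarrow>
     is_path tail head V A vs es \<and> set vs \<inter> X = {hd vs} \<and> set vs \<inter> Y = {last vs}"

definition reachable :: "('e \<Rightarrow> 'v) \<Rightarrow> ('e \<Rightarrow> 'v) \<Rightarrow> 'v set \<Rightarrow> 'e set \<Rightarrow> 'v \<Rightarrow> 'v \<Rightarrow> bool" where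
  "reachable tail head V A u v \<longleftrightarrow>
     (\<exists>vs es. is_path tail head V A vs es \<and> hd vs = u \<and> last vs = v)"

text \<open>Cycle in the underlying undirected multigraph (loops and parallel edges count).\<close>
definition has_ucycle :: "('e \<Rightarrow> 'v) \<Rightarrow> ('e \<Rightarrow> 'v) \<Rightarrow> 'v set \<Rightarrow> 'e set \<Rightarrow> bool" where
  "has_ucycle tail head V A \<longleftrightarrow>
     (\<exists>vs es. length es \<ge> 1 \<and> length vs = length es \<and> distinct vs \<and> distinct es \<and>
        set vs \<subseteq> V \<and> set es \<subseteq> A \<and>
        (\<forall>j<length es. joins tail head (es ! j) (vs ! j) (vs ! ((Suc j) mod length es))))"

text \<open>Arborescence: a directed tree (underlying multigraph a tree) with a root from
  which every vertex is reachable (connectivity follows from reachability).\<close>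
definition arborescence :: "('e \<Rightarrow> 'v) \<Rightarrow> ('e \<Rightarrow> 'v) \<Rightarrow> 'v set \<Rightarrow> 'e set \<Rightarrow> bool" where
  "arborescence tail head V A \<longleftrightarrow>
     is_digraph tail head V A \<and> \<not> has_ucycle tail head V A \<and>
     (\<exists>r\<in>V. \<forall>v\<in>V. reachable tail head V A r v)"

definition weak_adj :: "('e \<Rightarrow> 'v) \<Rightarrow> ('e \<Rightarrow> 'v) \<Rightarrow> 'e set \<Rightarrow> 'v \<Rightarrow> 'v \<Rightarrow> bool" where
  "weak_adj tail head A u v \<longleftrightarrow> (\<exists>e\<in>A. joins tail head e u v)"

definition wcomp :: "('e \<Rightarrow> 'v) \<Rightarrow> ('e \<Rightarrow> 'v) \<Rightarrow> 'v set \<Rightarrow> 'e set \<Rightarrow> 'v \<Rightarrow> 'v set" where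
  "wcomp tail head V A v = {u \<in> V. (weak_adj tail head A)\<^sup>*\<^sup>* v u}"

definition branching :: "('e \<Rightarrow> 'v) \<Rightarrow> ('e \<Rightarrow> 'v) \<Rightarrow> 'v set \<Rightarrow> 'e set \<Rightarrow> bool" where
  "branching tail head V A \<longleftrightarrow>
     is_digraph tail head V A \<and>
     (\<forall>v\<in>V. arborescence tail head (wcomp tail head V A v)
                {e \<in> A. tail e \<in> wcomp tail head V A v \<and> head e \<in> wcomp tail head V A v})"

definition in_edges :: "('e \<Rightarrow> 'v) \<Rightarrow> ('e \<Rightarrow> 'v) \<Rightarrow> 'e set \<Rightarrow> 'v set \<Rightarrow> 'e set" where
  "in_edges tail head A X = {e \<in> A. tail e \<notin> X \<and> head e \<in> X}"

end

theory Submission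
  imports Defs
begin


definition bal :: "('f \<Rightarrow> 'u) \<Rightarrow> ('f \<Rightarrow> 'u) \<Rightarrow> 'f set \<Rightarrow> 'u \<Rightarrow> int" where
  "bal ta he F v = (\<Sum>e\<in>F. (if he e = v then 1 else 0) - (if ta e = v then 1 else 0))"

lemma bal_empty[simp]: "bal ta he {} v = 0" by (simp add: bal_def)

lemma bal_union: "finite F \<Longrightarrow> finite G \<Longrightarrow> F \<inter> G = {} \<Longrightarrow>
   bal ta he (F \<union> G) v = bal ta he F v + bal ta he G v"
  unfolding bal_def by (simp add: sum.union_disjoint)

lemma bal_diff: "finite F \<Longrightarrow> G \<subseteq> F \<Longrightarrow>
   bal ta he (F - G) v = bal ta he F v - bal ta he G v"
  unfolding bal_def by (simp add: sum_diff finite_subset)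

lemma path_distinct_edges:
  assumes "is_path ta he W E vs es" shows "distinct es"
proof -
  have "inj_on (\<lambda>j. es ! j) {..<length es}"
  proof (rule inj_onI)
    fix i j assume "i \<in> {..<length es}" "j \<in> {..<length es}" "es ! i = es ! j"
    then have "vs ! i = vs ! j" using assms unfolding is_path_def by (metis lessThan_iff)
    moreover have "i < length vs" "j < length vs" using assms \<open>i \<in> _\<close> \<open>j \<in> _\<close> unfolding is_path_def by auto
    ultimately show "i = j" using assms unfolding is_path_def by (simp add: nth_eq_iff_index_eq)
  qed
  then show ?thesis unfolding distinct_conv_nth inj_on_def by blast
qed

lemma path_tele:
  assumes "is_path ta he W E vs es"
  shows "bal ta he (set es) v = (if last vs = v then 1 else 0) - (if hd vs = v then 1 else 0)"
proof -
  let ?g = "\<lambda>e. (if he e = v then 1 else 0) - (if ta e = v then (1::int) else 0)"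
  let ?f = "\<lambda>j. if vs ! j = v then (1::int) else 0"
  have d: "distinct es" using path_distinct_edges[OF assms] .
  have "bal ta he (set es) v = sum_list (map ?g es)"
    unfolding bal_def using d by (simp add: sum_list_distinct_conv_sum_set)
  also have "\<dots> = (\<Sum>j<length es. ?g (es ! j))"
    by (simp add: sum_list_sum_nth atLeast0LessThan)
  also have "\<dots> = (\<Sum>j<length es. ?f (Suc j) - ?f j)"
    using assms unfolding is_path_def by (intro sum.cong) auto
  also have "\<dots> = ?f (length es) - ?f 0" by (rule sum_lessThan_telescope)
  also have "\<dots> = (if last vs = v then 1 else 0) - (if hd vs = v then 1 else 0)"
    using assms unfolding is_path_def by (simp add: last_conv_nth hd_conv_nth)
  finally show ?thesis .
qed

lemma path_mono: "is_path ta he W E vs es \<Longrightarrow> E \<subseteq> E' \<Longrightarrow> is_path ta he W E' vs es"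
  unfolding is_path_def by blast

lemma path_drop:
  assumes "is_path ta he W E vs es" "m < length vs"
  shows "is_path ta he W E (drop m vs) (drop m es)"
  using assms unfolding is_path_def
  apply (auto simp: set_drop_subset[THEN subsetD] dest: in_set_dropD)
  done

definition radj :: "('f \<Rightarrow> 'u) \<Rightarrow> ('f \<Rightarrow> 'u) \<Rightarrow> 'f set \<Rightarrow> 'u \<Rightarrow> 'u \<Rightarrow> bool" where
  "radj ta he E u v \<longleftrightarrow> (\<exists>e\<in>E. ta e = u \<and> he e = v)"

lemma walk_to_path:
  assumes "(radj ta he E)\<^sup>*\<^sup>* a b" "a \<in> W" "\<forall>e\<in>E. ta e \<in> W \<and> he e \<in> W"
  shows "\<exists>vs es. is_path ta he W E vs es \<and> hd vs = a \<and> last vs = b"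
  using assms(1)
proof (induction rule: rtranclp_induct)
  case base
  then show ?case using assms(2) by (intro exI[of _ "[a]"] exI[of _ "[]"]) (simp add: is_path_def)
next
  case (step u v)
  then obtain vs es where p: "is_path ta he W E vs es" "hd vs = a" "last vs = u" by blast
  from step(2) obtain e where e: "e \<in> E" "ta e = u" "he e = v" by (auto simp: radj_def)
  show ?case
  proof (cases "v \<in> set vs")
    case True
    then obtain j where j: "j < length vs" "vs ! j = v" by (auto simp: in_set_conv_nth)
    have "is_path ta he W E (take (Suc j) vs) (take j es)"
      using p(1) j unfolding is_path_def
      by (auto simp: set_take_subset[THEN subsetD] dest: in_set_takeD)
    moreover have "hd (take (Suc j) vs) = a" using p j by (cases vs) auto
    moreover have "last (take (Suc j) vs) = v" using j by (subst last_conv_nth) (auto simp: min_def intro: arg_cong[where f="(!) vs"])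
    ultimately show ?thesis by blast
  next
    case False
    have "is_path ta he W E (vs @ [v]) (es @ [e])"
      using p(1) e False assms(3) unfolding is_path_def
      apply (auto simp: nth_append)
      subgoal for j using p(3) by (cases "j < length es") (auto simp: last_conv_nth less_Suc_eq)
      done
    moreover have "hd (vs @ [v]) = a" using p by (cases vs) (auto simp: is_path_def)
    ultimately show ?thesis by (intro exI[of _ "vs @ [v]"] exI[of _ "es @ [e]"]) auto
  qed
qed

lemma cut_value:
  assumes fin: "finite F" and tY: "t \<in> Y" and z: "\<forall>v\<in>Y. v \<noteq> t \<longrightarrow> bal ta he F v = 0"
  shows "bal ta he F t = (\<Sum>e\<in>F. (if he e \<in> Y then 1 else 0) - (if ta e \<in> Y then 1 else 0))"
proof -
  define S where "S = Y \<inter> (ta ` F \<union> he ` F)"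
  have fS: "finite S" using fin by (simp add: S_def)
  have "(\<Sum>e\<in>F. (if he e \<in> Y then 1 else 0) - (if ta e \<in> Y then (1::int) else 0))
      = (\<Sum>e\<in>F. \<Sum>v\<in>S. (if he e = v then 1 else 0) - (if ta e = v then 1 else 0))"
  proof (rule sum.cong)
    fix e assume e: "e \<in> F"
    have "(\<Sum>v\<in>S. (if he e = v then 1 else 0) - (if ta e = v then (1::int) else 0))
       = (\<Sum>v\<in>S. (if he e = v then 1 else 0)) - (\<Sum>v\<in>S. (if ta e = v then (1::int) else 0))"
      by (simp add: sum_subtractf)
    also have "\<dots> = (if he e \<in> Y then 1 else 0) - (if ta e \<in> Y then 1 else 0)"
      using fS e by (simp add: S_def)
    finally show "(if he e \<in> Y then 1 else 0) - (if ta e \<in> Y then 1 else 0)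
       = (\<Sum>v\<in>S. (if he e = v then 1 else 0) - (if ta e = v then (1::int) else 0))" by simp
  qed simp
  also have "\<dots> = (\<Sum>v\<in>S. bal ta he F v)" unfolding bal_def by (rule sum.swap)
  also have "\<dots> = (\<Sum>v\<in>S. if v = t then bal ta he F t else 0)"
    by (rule sum.cong) (use z in \<open>auto simp: S_def\<close>)
  also have "\<dots> = (if t \<in> S then bal ta he F t else 0)" using fS by simp
  also have "\<dots> = bal ta he F t"
  proof (cases "t \<in> S")
    case False
    then have "\<forall>e\<in>F. he e \<noteq> t \<and> ta e \<noteq> t" using tY by (auto simp: S_def)
    then show ?thesis by (simp add: bal_def)
  qed simp
  finally show ?thesis by simp
qed

definition rta :: "('f \<Rightarrow> 'u) \<Rightarrow> ('f \<Rightarrow> 'u) \<Rightarrow> 'f \<times> bool \<Rightarrow> 'u" where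
  "rta ta he r = (if snd r then ta (fst r) else he (fst r))"
definition rhe :: "('f \<Rightarrow> 'u) \<Rightarrow> ('f \<Rightarrow> 'u) \<Rightarrow> 'f \<times> bool \<Rightarrow> 'u" where
  "rhe ta he r = (if snd r then he (fst r) else ta (fst r))"
definition RE :: "'f set \<Rightarrow> 'f set \<Rightarrow> ('f \<times> bool) set" where
  "RE E F = (\<lambda>e. (e, True)) ` (E - F) \<union> (\<lambda>e. (e, False)) ` F"

definition isflow where
  "isflow ta he E s t F m \<longleftrightarrow> finite F \<and> F \<subseteq> E \<and> bal ta he F t = int m \<and>
     (\<forall>v. v \<noteq> s \<and> v \<noteq> t \<longrightarrow> bal ta he F v = 0)"

lemma res_bal:
  assumes "finite R" "R \<subseteq> RE E F"
  shows "bal (rta ta he) (rhe ta he) R v =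
     bal ta he {e. (e, True) \<in> R} v - bal ta he {e. (e, False) \<in> R} v"
proof -
  let ?Fw = "{e. (e, True) \<in> R}" and ?B = "{e. (e, False) \<in> R}"
  have R: "R = (\<lambda>e. (e, True)) ` ?Fw \<union> (\<lambda>e. (e, False)) ` ?B"
    apply (rule set_eqI) subgoal for x by (cases x) (cases "snd x"; auto) done
  have f1: "finite ?Fw" using assms(1) by (rule finite_vimageI[of R "\<lambda>e. (e,True)", simplified vimage_def]) (simp add: inj_on_def)
  have f2: "finite ?B" using assms(1) by (rule finite_vimageI[of R "\<lambda>e. (e,False)", simplified vimage_def]) (simp add: inj_on_def)
  have "bal (rta ta he) (rhe ta he) R v =
      bal (rta ta he) (rhe ta he) ((\<lambda>e. (e, True)) ` ?Fw) v + bal (rta ta he) (rhe ta he) ((\<lambda>e. (e, False)) ` ?B) v"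
    by (subst R, rule bal_union) (use f1 f2 in auto)
  also have "bal (rta ta he) (rhe ta he) ((\<lambda>e. (e, True)) ` ?Fw) v = bal ta he ?Fw v"
    unfolding bal_def by (subst sum.reindex) (auto simp: inj_on_def rta_def rhe_def)
  also have "bal (rta ta he) (rhe ta he) ((\<lambda>e. (e, False)) ` ?B) v = - bal ta he ?B v"
    unfolding bal_def by (subst sum.reindex) (auto simp: inj_on_def rta_def rhe_def sum_negf[symmetric])
  finally show ?thesis by simp
qed


lemma RE_ends: "\<forall>e\<in>E. ta e \<in> W \<and> he e \<in> W \<Longrightarrow> F \<subseteq> E \<Longrightarrow>
   \<forall>r\<in>RE E F. rta ta he r \<in> W \<and> rhe ta he r \<in> W"
  by (auto simp: RE_def rta_def rhe_def)

lemma augment: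
  assumes ends: "\<forall>e\<in>E. ta e \<in> W \<and> he e \<in> W" and sW: "s \<in> W" and tW: "t \<in> W" and st: "s \<noteq> t"
    and cut: "\<forall>Y. Y \<subseteq> W \<and> t \<in> Y \<and> s \<notin> Y \<longrightarrow>
               infinite (in_edges ta he E Y) \<or> k \<le> card (in_edges ta he E Y)"
    and fl: "isflow ta he E s t F m" and mk: "m < k"
  shows "\<exists>F'. isflow ta he E s t F' (Suc m)"
proof -
  have fF: "finite F" and FE: "F \<subseteq> E" and bt: "bal ta he F t = int m"
    and b0: "\<forall>v. v \<noteq> s \<and> v \<noteq> t \<longrightarrow> bal ta he F v = 0" using fl by (auto simp: isflow_def)
  define R where "R = {v. (radj (rta ta he) (rhe ta he) (RE E F))\<^sup>*\<^sup>* s v}"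
  show ?thesis
  proof (cases "t \<in> R")
    case True
    then obtain vs es where p: "is_path (rta ta he) (rhe ta he) W (RE E F) vs es" "hd vs = s" "last vs = t"
      using walk_to_path[OF _ sW RE_ends[OF ends FE]] unfolding R_def by blast
    define Fw where "Fw = {e. (e, True) \<in> set es}"
    define B where "B = {e. (e, False) \<in> set es}"
    have sub: "set es \<subseteq> RE E F" using p(1) unfolding is_path_def by (metis in_set_conv_nth subsetI)
    have fFw: "finite Fw" unfolding Fw_def
      by (rule finite_vimageI[of "set es" "\<lambda>e. (e,True)", simplified vimage_def]) (auto simp: inj_on_def)
    have fB: "finite B" unfolding B_def
      by (rule finite_vimageI[of "set es" "\<lambda>e. (e,False)", simplified vimage_def]) (auto simp: inj_on_def)
    have BF: "B \<subseteq> F" using sub by (auto simp: B_def RE_def)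
    have FwE: "Fw \<subseteq> E - F" using sub by (auto simp: Fw_def RE_def)
    define F' where "F' = (F - B) \<union> Fw"
    have fF': "finite F'" using fF fFw by (simp add: F'_def)
    have balF': "bal ta he F' v = bal ta he F v + ((if t = v then 1 else 0) - (if s = v then 1 else 0))" for v
    proof -
      have "bal ta he F' v = bal ta he (F - B) v + bal ta he Fw v"
        unfolding F'_def by (rule bal_union) (use fF fFw FwE in auto)
      also have "\<dots> = bal ta he F v - bal ta he B v + bal ta he Fw v" using bal_diff[OF fF BF] by simp
      finally have 1: "bal ta he F' v = bal ta he F v - bal ta he B v + bal ta he Fw v" .
      have "bal ta he Fw v - bal ta he B v = bal (rta ta he) (rhe ta he) (set es) v"
        unfolding Fw_def B_def using res_bal[OF finite_set sub, of ta he v] by simp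
      then have "bal ta he Fw v - bal ta he B v = (if t = v then 1 else 0) - (if s = v then 1 else 0)"
        using path_tele[OF p(1)] p(2,3) by simp
      with 1 show ?thesis by simp
    qed
    have "isflow ta he E s t F' (Suc m)"
    proof -
      have "F' \<subseteq> E" using FE FwE by (auto simp: F'_def)
      moreover have "bal ta he F' t = int (Suc m)" using balF'[of t] bt st by simp
      moreover have "\<forall>v. v \<noteq> s \<and> v \<noteq> t \<longrightarrow> bal ta he F' v = 0" using balF' b0 by simp
      ultimately show ?thesis using fF' unfolding isflow_def by blast
    qed
    then show ?thesis by blast
  next
    case False
    define Y where "Y = W - R"
    have sR: "s \<in> R" by (simp add: R_def)
    have Y: "Y \<subseteq> W" "t \<in> Y" "s \<notin> Y" using False tW sR by (auto simp: Y_def)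
    have inF: "in_edges ta he E Y \<subseteq> F"
    proof
      fix e assume e: "e \<in> in_edges ta he E Y"
      then have eE: "e \<in> E" and "ta e \<notin> Y" "he e \<in> Y" by (auto simp: in_edges_def)
      then have taR: "ta e \<in> R" using ends by (auto simp: Y_def)
      show "e \<in> F"
      proof (rule ccontr)
        assume "e \<notin> F"
        then have "(e, True) \<in> RE E F" using eE by (auto simp: RE_def)
        then have "radj (rta ta he) (rhe ta he) (RE E F) (ta e) (he e)"
          unfolding radj_def by (force simp: rta_def rhe_def)
        then have "he e \<in> R" using taR unfolding R_def by (auto intro: rtranclp.rtrancl_into_rtrancl)
        then show False using \<open>he e \<in> Y\<close> by (auto simp: Y_def)
      qed
    qed
    have noout: "\<not> (ta e \<in> Y \<and> he e \<notin> Y)" if "e \<in> F" for e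
    proof
      assume a: "ta e \<in> Y \<and> he e \<notin> Y"
      then have heR: "he e \<in> R" using ends FE that by (auto simp: Y_def)
      have "(e, False) \<in> RE E F" using that by (auto simp: RE_def)
      then have "radj (rta ta he) (rhe ta he) (RE E F) (he e) (ta e)"
        unfolding radj_def by (force simp: rta_def rhe_def)
      then have "ta e \<in> R" using heR unfolding R_def by (auto intro: rtranclp.rtrancl_into_rtrancl)
      then show False using a by (auto simp: Y_def)
    qed
    have "bal ta he F t = (\<Sum>e\<in>F. (if he e \<in> Y then 1 else 0) - (if ta e \<in> Y then 1 else 0))"
      by (rule cut_value) (use fF Y b0 in auto)
    also have "\<dots> = (\<Sum>e\<in>F. if e \<in> in_edges ta he E Y then 1 else 0)"
      by (rule sum.cong) (use noout FE in \<open>auto simp: in_edges_def split: if_splits\<close>)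
    also have "\<dots> = int (card (in_edges ta he E Y))"
      using inF fF by (simp add: sum.If_cases Int_absorb1 inf_commute)
    finally have m: "m = card (in_edges ta he E Y)" using bt by simp
    have "finite (in_edges ta he E Y)" using inF fF finite_subset by blast
    moreover have "infinite (in_edges ta he E Y) \<or> k \<le> card (in_edges ta he E Y)"
      using cut Y by blast
    ultimately show ?thesis using m mk by simp
  qed
qed

lemma flow_exists:
  assumes ends: "\<forall>e\<in>E. ta e \<in> W \<and> he e \<in> W" and sW: "s \<in> W" and tW: "t \<in> W" and st: "s \<noteq> t"
    and cut: "\<forall>Y. Y \<subseteq> W \<and> t \<in> Y \<and> s \<notin> Y \<longrightarrow>
               infinite (in_edges ta he E Y) \<or> k \<le> card (in_edges ta he E Y)"
  shows "m \<le> k \<Longrightarrow> \<exists>F. isflow ta he E s t F m"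
proof (induction m)
  case 0
  show ?case by (rule exI[of _ "{}"]) (simp add: isflow_def)
next
  case (Suc m)
  then obtain F where "isflow ta he E s t F m" by auto
  then show ?case using augment[OF ends sW tW st cut] Suc.prems by auto
qed


lemma decompose:
  assumes ends: "\<forall>e\<in>E. ta e \<in> W \<and> he e \<in> W" and sW: "s \<in> W" and tW: "t \<in> W" and st: "s \<noteq> t"
  shows "isflow ta he E s t F m \<Longrightarrow> \<exists>P. (\<forall>i<m. is_path ta he W E (fst (P i)) (snd (P i)) \<and>
            hd (fst (P i)) = s \<and> last (fst (P i)) = t \<and> set (snd (P i)) \<subseteq> F) \<and>
          (\<forall>i<m. \<forall>j<m. i \<noteq> j \<longrightarrow> set (snd (P i)) \<inter> set (snd (P j)) = {})"
proof (induction m arbitrary: F)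
  case 0
  show ?case by simp
next
  case (Suc m)
  have fF: "finite F" and FE: "F \<subseteq> E" and bt: "bal ta he F t = int (Suc m)"
    and b0: "\<forall>v. v \<noteq> s \<and> v \<noteq> t \<longrightarrow> bal ta he F v = 0" using Suc.prems by (auto simp: isflow_def)
  have endsF: "\<forall>e\<in>F. ta e \<in> W \<and> he e \<in> W" using ends FE by blast
  define R where "R = {v. (radj ta he F)\<^sup>*\<^sup>* s v}"
  have tR: "t \<in> R"
  proof (rule ccontr)
    assume "t \<notin> R"
    define Y where "Y = W - R"
    have sR: "s \<in> R" by (simp add: R_def)
    have Y: "t \<in> Y" "s \<notin> Y" using \<open>t \<notin> R\<close> tW sR by (auto simp: Y_def)
    have "bal ta he F t = (\<Sum>e\<in>F. (if he e \<in> Y then 1 else 0) - (if ta e \<in> Y then 1 else 0))"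
      by (rule cut_value) (use fF Y b0 in auto)
    also have "\<dots> \<le> (\<Sum>e\<in>F. (0::int))"
    proof (rule sum_mono)
      fix e assume e: "e \<in> F"
      have "\<not> (he e \<in> Y \<and> ta e \<notin> Y)"
      proof
        assume a: "he e \<in> Y \<and> ta e \<notin> Y"
        then have "ta e \<in> R" using endsF e by (auto simp: Y_def)
        moreover have "radj ta he F (ta e) (he e)" using e by (auto simp: radj_def)
        ultimately have "he e \<in> R" unfolding R_def by (auto intro: rtranclp.rtrancl_into_rtrancl)
        then show False using a by (auto simp: Y_def)
      qed
      then show "(if he e \<in> Y then 1 else 0) - (if ta e \<in> Y then 1 else 0) \<le> (0::int)" by auto
    qed
    finally show False using bt by simp
  qed
  then obtain vs es where p: "is_path ta he W F vs es" "hd vs = s" "last vs = t"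
    using walk_to_path[OF _ sW endsF] unfolding R_def by blast
  have sub: "set es \<subseteq> F" using p(1) unfolding is_path_def by (metis in_set_conv_nth subsetI)
  define F' where "F' = F - set es"
  have "isflow ta he E s t F' m"
  proof -
    have bF': "bal ta he F' v = bal ta he F v - ((if t = v then 1 else 0) - (if s = v then 1 else 0))" for v
      unfolding F'_def using bal_diff[OF fF sub, of ta he v] path_tele[OF p(1), of v] p(2,3) by simp
    have "F' \<subseteq> E" using FE by (auto simp: F'_def)
    moreover have "bal ta he F' t = int m" using bF'[of t] bt st by simp
    moreover have "\<forall>v. v \<noteq> s \<and> v \<noteq> t \<longrightarrow> bal ta he F' v = 0" using bF' b0 by simp
    ultimately show ?thesis using fF unfolding isflow_def F'_def by blast
  qed
  then obtain P where P: "\<forall>i<m. is_path ta he W E (fst (P i)) (snd (P i)) \<and>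
            hd (fst (P i)) = s \<and> last (fst (P i)) = t \<and> set (snd (P i)) \<subseteq> F'"
     "\<forall>i<m. \<forall>j<m. i \<noteq> j \<longrightarrow> set (snd (P i)) \<inter> set (snd (P j)) = {}" using Suc.IH by blast
  define P' where "P' = P(m := (vs, es))"
  have pE: "is_path ta he W E vs es" using path_mono[OF p(1) FE] .
  have "\<forall>i<Suc m. is_path ta he W E (fst (P' i)) (snd (P' i)) \<and>
            hd (fst (P' i)) = s \<and> last (fst (P' i)) = t \<and> set (snd (P' i)) \<subseteq> F"
    using P(1) pE p sub by (auto simp: P'_def less_Suc_eq F'_def)
  moreover have "\<forall>i<Suc m. \<forall>j<Suc m. i \<noteq> j \<longrightarrow> set (snd (P' i)) \<inter> set (snd (P' j)) = {}"
    using P by (auto simp: P'_def less_Suc_eq F'_def; blast)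
  ultimately show ?case by blast
qed

theorem menger_core:
  assumes ends: "\<forall>e\<in>E. ta e \<in> W \<and> he e \<in> W" and sW: "s \<in> W" and tW: "t \<in> W" and st: "s \<noteq> t"
    and cut: "\<forall>Y. Y \<subseteq> W \<and> t \<in> Y \<and> s \<notin> Y \<longrightarrow>
               infinite (in_edges ta he E Y) \<or> k \<le> card (in_edges ta he E Y)"
  shows "\<exists>P. (\<forall>i<k. is_path ta he W E (fst (P i)) (snd (P i)) \<and>
            hd (fst (P i)) = s \<and> last (fst (P i)) = t) \<and>
          (\<forall>i<k. \<forall>j<k. i \<noteq> j \<longrightarrow> set (snd (P i)) \<inter> set (snd (P j)) = {})"
proof -
  obtain F where "isflow ta he E s t F k" using flow_exists[OF ends sW tW st cut] by blast
  from decompose[OF ends sW tW st this] show ?thesis by blast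
qed



lemma truncate:
  assumes p: "is_path ta he V A vs es" and h: "hd vs \<in> S" and l: "last vs = w"
  shows "\<exists>q. path_from_to ta he V A (drop q vs) (drop q es) S {w}"
proof -
  define M where "M = {m. m < length vs \<and> vs ! m \<in> S}"
  have ne: "vs \<noteq> []" using p by (simp add: is_path_def)
  have "0 \<in> M" using h ne by (simp add: M_def hd_conv_nth)
  have fM: "finite M" by (simp add: M_def)
  define q where "q = Max M"
  have qM: "q \<in> M" using fM \<open>0 \<in> M\<close> unfolding q_def by (intro Max_in) auto
  have qmax: "\<And>m. m \<in> M \<Longrightarrow> m \<le> q" using fM unfolding q_def by simp
  have ql: "q < length vs" and qS: "vs ! q \<in> S" using qM by (auto simp: M_def)
  have pd: "is_path ta he V A (drop q vs) (drop q es)" by (rule path_drop[OF p ql])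
  have hd': "hd (drop q vs) = vs ! q" using ql by (simp add: hd_drop_conv_nth)
  have "set (drop q vs) \<inter> S = {vs ! q}"
  proof
    show "set (drop q vs) \<inter> S \<subseteq> {vs ! q}"
    proof
      fix x assume x: "x \<in> set (drop q vs) \<inter> S"
      then obtain r where r: "r < length vs - q" "x = drop q vs ! r" by (auto simp: in_set_conv_nth)
      then have "x = vs ! (q + r)" "q + r < length vs" using ql by auto
      then have "q + r \<in> M" using x by (auto simp: M_def)
      then have "r = 0" using qmax by (metis add_le_same_cancel1 le_zero_eq)
      then show "x \<in> {vs ! q}" using \<open>x = vs ! (q + r)\<close> by simp
    qed
    have "drop q vs \<noteq> []" using ql by simp
    then have "vs ! q \<in> set (drop q vs)" by (metis hd' hd_in_set)
    then show "{vs ! q} \<subseteq> set (drop q vs) \<inter> S" using qS by blast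
  qed
  moreover have "last (drop q vs) = w" using l ql by simp
  moreover have "w \<in> set (drop q vs)" using ql \<open>last (drop q vs) = w\<close> last_in_set[of "drop q vs"] by simp
  ultimately have "set (drop q vs) \<inter> {w} = {w}" by blast
  have "path_from_to ta he V A (drop q vs) (drop q es) S {w}" unfolding path_from_to_def
    using pd hd' \<open>set (drop q vs) \<inter> S = {vs ! q}\<close>
    \<open>set (drop q vs) \<inter> {w} = {w}\<close> \<open>last (drop q vs) = w\<close> by simp
  then show ?thesis by blast
qed

lemma path_transfer:
  assumes p: "is_path ta' he' W' E' (map f vs) (map g es)" and inj: "inj f"
    and ta: "\<And>e. ta' (g e) = f (ta e)" and he: "\<And>e. he' (g e) = f (he e)"
    and E: "\<And>e. g e \<in> E' \<Longrightarrow> e \<in> E" and W: "\<And>x. f x \<in> W' \<Longrightarrow> x \<in> W"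
  shows "is_path ta he W E vs es"
proof -
  have p0: "map f vs \<noteq> []" "distinct (map f vs)" "length (map f vs) = Suc (length (map g es))"
    using p unfolding is_path_def by blast+
  have a: "vs \<noteq> []" "distinct vs" "length vs = Suc (length es)"
    using p0 by (simp_all add: distinct_map)
  have b: "set vs \<subseteq> W"
  proof
    fix x assume "x \<in> set vs" 
    moreover have "set (map f vs) \<subseteq> W'" using p unfolding is_path_def by blast
    ultimately have "f x \<in> W'" by auto
    then show "x \<in> W" by (rule W)
  qed
  have c: "es ! j \<in> E \<and> ta (es ! j) = vs ! j \<and> he (es ! j) = vs ! Suc j" if j: "j < length es" for j
  proof -
    have "map g es ! j \<in> E' \<and> ta' (map g es ! j) = map f vs ! j \<and> he' (map g es ! j) = map f vs ! Suc j"
      using p j unfolding is_path_def length_map by blast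
    then have "g (es ! j) \<in> E'" "f (ta (es ! j)) = f (vs ! j)" "f (he (es ! j)) = f (vs ! Suc j)"
      using j a(3) by (simp_all add: ta he)
    then show ?thesis using E inj by (simp add: inj_eq)
  qed
  show ?thesis using a b c by (simp add: is_path_def)
qed

definition ata :: "('e \<Rightarrow> 'v) \<Rightarrow> 'e + (nat + nat \<times> 'v) \<Rightarrow> ('v + nat) option" where
  "ata tail x = (case x of Inl e \<Rightarrow> Some (Inl (tail e)) | Inr (Inl i) \<Rightarrow> None
                 | Inr (Inr iv) \<Rightarrow> Some (Inr (fst iv)))"
definition ahe :: "('e \<Rightarrow> 'v) \<Rightarrow> 'e + (nat + nat \<times> 'v) \<Rightarrow> ('v + nat) option" where
  "ahe head x = (case x of Inl e \<Rightarrow> Some (Inl (head e)) | Inr (Inl i) \<Rightarrow> Some (Inr i)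
                 | Inr (Inr iv) \<Rightarrow> Some (Inl (snd iv)))"
lemma ata_simps[simp]: "ata tail (Inl e) = Some (Inl (tail e))" "ata tail (Inr (Inl i)) = None"
  "ata tail (Inr (Inr (i, v))) = Some (Inr i)" by (simp_all add: ata_def)
lemma ahe_simps[simp]: "ahe head (Inl e) = Some (Inl (head e))" "ahe head (Inr (Inl i)) = Some (Inr i)"
  "ahe head (Inr (Inr (i, v))) = Some (Inl v)" by (simp_all add: ahe_def)

definition auxW :: "nat \<Rightarrow> 'v set \<Rightarrow> ('v + nat) option set" where
  "auxW k V = insert None (Some ` Inr ` {..<k} \<union> Some ` Inl ` V)"
definition auxE :: "'e set \<Rightarrow> nat \<Rightarrow> (nat \<Rightarrow> 'v set) \<Rightarrow> ('e + (nat + nat \<times> 'v)) set" where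
  "auxE A0 k Vs = Inl ` A0 \<union> Inr ` Inl ` {..<k} \<union> Inr ` Inr ` {(i, v). i < k \<and> v \<in> Vs i}"

lemma auxE_cases:
  assumes "x \<in> auxE A0 k Vs"
  obtains (Ea) a where "x = Inl a" "a \<in> A0"
    | (Sa) i where "x = Inr (Inl i)" "i < k"
    | (Ta) i v where "x = Inr (Inr (i, v))" "i < k" "v \<in> Vs i"
  using assms unfolding auxE_def by blast

lemma extract_path:
  fixes tail head :: "'e \<Rightarrow> 'v" and vs :: "('v + nat) option list"
    and es :: "('e + (nat + nat \<times> 'v)) list"
  assumes p: "is_path (ata tail) (ahe head) (auxW k V) (auxE A0 k Vs) vs es"
   and h: "hd vs = None" and l: "last vs = Some (Inl w)"
  shows "\<exists>j<k. es ! 0 = Inr (Inl j) \<and> es \<noteq> [] \<and>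
     (\<exists>vs0 es0. path_from_to tail head V A0 vs0 es0 (Vs j) {w} \<and> Inl ` set es0 \<subseteq> set es)"
proof -
  let ?ta = "ata tail" and ?he = "ahe head"
  have ne: "vs \<noteq> []" and dv: "distinct vs" and sW: "set vs \<subseteq> auxW k V"
    and len: "length vs = Suc (length es)"
    and ed: "\<And>j. j < length es \<Longrightarrow> es ! j \<in> auxE A0 k Vs \<and> ?ta (es ! j) = vs ! j \<and> ?he (es ! j) = vs ! Suc j"
    using p unfolding is_path_def by blast+
  have v0: "vs ! 0 = None" using h ne by (simp add: hd_conv_nth)
  have vl: "vs ! length es = Some (Inl w)" using l ne len by (simp add: last_conv_nth)
  have n1: "1 \<le> length es" using v0 vl by (cases "length es") auto
  have n1': "0 < length es" using n1 by linarith
  obtain j where j: "es ! 0 = Inr (Inl j)" "j < k"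
  proof (rule auxE_cases[OF ed[OF _, THEN conjunct1, of 0]])
    show "0 < length es" by (rule n1')
  next
    fix a assume "es ! 0 = Inl a" then show thesis using ed[OF n1'] v0 by simp
  next
    fix i v assume "es ! 0 = Inr (Inr (i, v))" then show thesis using ed[OF n1'] v0 by simp
  qed
  have v1: "vs ! 1 = Some (Inr j)" using ed[OF n1'] j by simp
  have n2: "2 \<le> length es"
  proof (rule ccontr)
    assume "\<not> 2 \<le> length es" then have "length es = 1" using n1 by simp
    then show False using v1 vl by simp
  qed
  have n2': "1 < length es" using n2 by linarith
  obtain v where v: "es ! 1 = Inr (Inr (j, v))" "v \<in> Vs j"
  proof (rule auxE_cases[OF ed[OF _, THEN conjunct1, of 1]])
    show "1 < length es" by (rule n2')
  next
    fix a assume "es ! 1 = Inl a" then show thesis using ed[OF n2'] v1 by simp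
  next
    fix i assume "es ! 1 = Inr (Inl i)" then show thesis using ed[OF n2'] v1 by simp
  next
    fix i v' assume a: "es ! 1 = Inr (Inr (i, v'))" "v' \<in> Vs i"
    then have "i = j" using ed[OF n2'] v1 by simp
    then show thesis using a that by simp
  qed
  have v2: "vs ! 2 = Some (Inl v)" using ed[OF n2'] v by (simp add: numeral_2_eq_2)
  have VV: "\<exists>x. vs ! m = Some (Inl x)" if m: "2 \<le> m" "m < length vs" for m
  proof -
    obtain m' where m': "m = Suc m'" "1 \<le> m'" using m by (cases m) auto
    have "m' < length es" using m m' len by simp
    from ed[OF this] have e: "es ! m' \<in> auxE A0 k Vs" "?ta (es ! m') = vs ! m'" "?he (es ! m') = vs ! m" 
      using m' by auto
    show ?thesis
    proof (rule auxE_cases[OF e(1)])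
      fix a assume "es ! m' = Inl a" then show ?thesis using e by (metis ahe_simps(1))
    next
      fix i assume "es ! m' = Inr (Inl i)"
      then have "vs ! m' = vs ! 0" using e v0 by simp
      then have "m' = 0" using dv \<open>m' < length es\<close> len by (simp add: nth_eq_iff_index_eq)
      then show ?thesis using m' by simp
    next
      fix i v' assume "es ! m' = Inr (Inr (i, v'))" then show ?thesis using e by (metis ahe_simps(3))
    qed
  qed
  have EE: "\<exists>a. es ! m = Inl a" if m: "2 \<le> m" "m < length es" for m
  proof -
    obtain x where x: "vs ! m = Some (Inl x)" using VV[of m] m len by auto
    from ed[OF m(2)] have e: "es ! m \<in> auxE A0 k Vs" "?ta (es ! m) = vs ! m" by auto
    show ?thesis by (rule auxE_cases[OF e(1)]) (use e x in auto)
  qed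
  define pv :: "('v + nat) option \<Rightarrow> 'v" where "pv x = (case x of Some (Inl y) \<Rightarrow> y | _ \<Rightarrow> undefined)" for x
  define pe :: "'e + (nat + nat \<times> 'v) \<Rightarrow> 'e" where "pe x = (case x of Inl y \<Rightarrow> y | _ \<Rightarrow> undefined)" for x
  define vs1 where "vs1 = map pv (drop 2 vs)"
  define es1 where "es1 = map pe (drop 2 es)"
  have dvs: "drop 2 vs = map (Some \<circ> Inl) vs1"
  proof -
    have "\<forall>x\<in>set (drop 2 vs). (Some \<circ> Inl \<circ> pv) x = x"
    proof
      fix x assume "x \<in> set (drop 2 vs)"
      then obtain r where "r < length vs - 2" "x = vs ! (2 + r)" by (auto simp: in_set_conv_nth)
      moreover then have "2 + r < length vs" by linarith
      ultimately obtain y where "x = Some (Inl y)" using VV[of "2 + r"] by auto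
      then show "(Some \<circ> Inl \<circ> pv) x = x" by (simp add: pv_def)
    qed
    then show ?thesis unfolding vs1_def map_map[symmetric] by (simp add: map_idI)
  qed
  have des: "drop 2 es = map Inl es1"
  proof -
    have "\<forall>x\<in>set (drop 2 es). (Inl \<circ> pe) x = x"
    proof
      fix x assume "x \<in> set (drop 2 es)"
      then obtain r where "r < length es - 2" "x = es ! (2 + r)" by (auto simp: in_set_conv_nth)
      moreover then have "2 + r < length es" by linarith
      ultimately obtain y where "x = Inl y" using EE[of "2 + r"] by auto
      then show "(Inl \<circ> pe) x = x" by (simp add: pe_def)
    qed
    then show ?thesis unfolding es1_def map_map[symmetric] by (simp add: map_idI)
  qed
  have pd: "is_path ?ta ?he (auxW k V) (auxE A0 k Vs) (drop 2 vs) (drop 2 es)"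
    by (rule path_drop[OF p]) (use n2 len in simp)
  have p1: "is_path tail head V A0 vs1 es1"
  proof (rule path_transfer[where f = "Some \<circ> Inl" and g = Inl])
    show "is_path ?ta ?he (auxW k V) (auxE A0 k Vs) (map (Some \<circ> Inl) vs1) (map Inl es1)"
      using pd dvs des by simp
  qed (auto simp: inj_def auxE_def auxW_def)
  have "hd (drop 2 vs) = Some (Inl v)" using v2 n2 len by (simp add: hd_drop_conv_nth)
  then have hv: "hd vs1 = v" using dvs n2 len
    by (metis comp_apply drop_eq_Nil2 hd_map not_less_eq_eq numeral_2_eq_2 option.inject sum.inject(1) Suc_le_mono list.map_disc_iff)
  have "last (drop 2 vs) = Some (Inl w)" using l n2 len by simp
  then have lv: "last vs1 = w" using dvs n2 len
    by (metis comp_apply drop_eq_Nil2 last_map not_less_eq_eq numeral_2_eq_2 option.inject sum.inject(1) Suc_le_mono list.map_disc_iff)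
  obtain q where q: "path_from_to tail head V A0 (drop q vs1) (drop q es1) (Vs j) {w}"
    using truncate[OF p1 _ lv] hv v(2) by blast
  have "Inl ` set (drop q es1) \<subseteq> set es"
  proof -
    have "Inl ` set (drop q es1) \<subseteq> Inl ` set es1" by (auto dest: in_set_dropD)
    also have "\<dots> = set (drop 2 es)" using des by simp
    also have "\<dots> \<subseteq> set es" by (rule set_drop_subset)
    finally show ?thesis .
  qed
  then show ?thesis using j q n1 by auto
qed

theorem proposition3:
  fixes tail head :: "'e \<Rightarrow> 'v" and V :: "'v set" and A :: "'e set"
    and k :: nat and Vs :: "nat \<Rightarrow> 'v set" and As :: "nat \<Rightarrow> 'e set"
  assumes D: "is_digraph tail head V A"
    and sub: "\<forall>i<k. Vs i \<subseteq> V \<and> As i \<subseteq> A"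
    and br: "\<forall>i<k. branching tail head (Vs i) (As i)"
    and disj: "\<forall>i<k. \<forall>j<k. i \<noteq> j \<longrightarrow> As i \<inter> As j = {}"
    and cut: "\<forall>X. X \<subseteq> V \<and> X \<noteq> {} \<longrightarrow>
               (let R = in_edges tail head (A - (\<Union>i<k. As i)) X
                in infinite R \<or> card {i. i < k \<and> Vs i \<inter> X = {}} \<le> card R)"
  shows "\<forall>w\<in>V. \<exists>P :: nat \<Rightarrow> 'v list \<times> 'e list.
           (\<forall>i<k. path_from_to tail head V (A - (\<Union>i<k. As i)) (fst (P i)) (snd (P i)) (Vs i) {w}) \<and>
           (\<forall>i<k. \<forall>j<k. i \<noteq> j \<longrightarrow> set (snd (P i)) \<inter> set (snd (P j)) = {})"
proof (intro ballI)
  fix w assume wV: "w \<in> V"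
  define A0 where "A0 = A - (\<Union>i<k. As i)"
  define W' where "W' = auxW k V"
  define E' where "E' = auxE A0 k Vs"
  define t :: "('v + nat) option" where "t = Some (Inl w)"
  have A0A: "A0 \<subseteq> A" by (auto simp: A0_def)
  have ends: "\<forall>e\<in>E'. ata tail e \<in> W' \<and> ahe head e \<in> W'"
  proof
    fix e assume "e \<in> E'"
    then show "ata tail e \<in> W' \<and> ahe head e \<in> W'"
      unfolding E'_def
    proof (rule auxE_cases)
      fix a assume "e = Inl a" "a \<in> A0"
      then show ?thesis using D A0A by (force simp: is_digraph_def auxW_def W'_def)
    next
      fix i assume "e = Inr (Inl i)" "i < k"
      then show ?thesis by (auto simp: auxW_def W'_def)
    next
      fix i v assume "e = Inr (Inr (i, v))" "i < k" "v \<in> Vs i"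
      then show ?thesis using sub by (force simp: auxW_def W'_def)
    qed
  qed
  have sW: "None \<in> W'" by (simp add: W'_def auxW_def)
  have tW: "t \<in> W'" using wV by (simp add: W'_def auxW_def t_def)
  have st: "None \<noteq> t" by (simp add: t_def)
  have cut': "\<forall>Y. Y \<subseteq> W' \<and> t \<in> Y \<and> None \<notin> Y \<longrightarrow>
      infinite (in_edges (ata tail) (ahe head) E' Y) \<or> k \<le> card (in_edges (ata tail) (ahe head) E' Y)"
  proof (intro allI impI)
    fix Y assume Y: "Y \<subseteq> W' \<and> t \<in> Y \<and> None \<notin> Y"
    define X where "X = {v. Some (Inl v) \<in> Y}"
    have XV: "X \<subseteq> V"
    proof
      fix x assume "x \<in> X"
      then have "Some (Inl x) \<in> W'" using Y by (auto simp: X_def)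
      then show "x \<in> V" unfolding W'_def auxW_def by blast
    qed
    have "w \<in> X" using Y by (simp add: X_def t_def)
    then have Xne: "X \<noteq> {}" by blast
    define R where "R = in_edges tail head A0 X"
    define I0 where "I0 = {i. i < k \<and> Vs i \<inter> X = {}}"
    have c0: "X \<subseteq> V \<and> X \<noteq> {} \<longrightarrow>
               (let R = in_edges tail head (A - (\<Union>i<k. As i)) X
                in infinite R \<or> card {i. i < k \<and> Vs i \<inter> X = {}} \<le> card R)"
      using cut by (rule spec)
    have c: "infinite R \<or> card I0 \<le> card R"
      using mp[OF c0] XV Xne unfolding R_def I0_def A0_def Let_def by simp
    define IE where "IE = in_edges (ata tail) (ahe head) E' Y"
    define I1 where "I1 = {i. i < k \<and> Some (Inr i) \<in> Y}"
    define I2 where "I2 = {i. i < k \<and> Some (Inr i) \<notin> Y \<and> Vs i \<inter> X \<noteq> {}}"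
    define g :: "nat \<Rightarrow> 'e + (nat + nat \<times> 'v)" where "g i = Inr (Inr (i, SOME v. v \<in> Vs i \<inter> X))" for i
    have h1: "Inl ` R \<subseteq> IE"
    proof
      fix x :: "'e + (nat + nat \<times> 'v)" assume "x \<in> Inl ` R"
      then obtain a where a: "x = Inl a" "a \<in> A0" "tail a \<notin> X" "head a \<in> X"
        by (auto simp: R_def in_edges_def)
      have "x \<in> E'" unfolding E'_def auxE_def a(1) by (intro UnI1 imageI a(2))
      moreover have "ata tail x \<notin> Y" using a(1,3) by (simp add: X_def)
      moreover have "ahe head x \<in> Y" using a(1,4) by (simp add: X_def)
      ultimately show "x \<in> IE" unfolding IE_def in_edges_def by (intro CollectI conjI)
    qed
    have h2: "Inr ` Inl ` I1 \<subseteq> IE"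
    proof
      fix x :: "'e + (nat + nat \<times> 'v)" assume "x \<in> Inr ` Inl ` I1"
      then obtain i where a: "x = Inr (Inl i)" "i < k" "Some (Inr i) \<in> Y"
        by (auto simp: I1_def)
      have "x \<in> E'" unfolding E'_def auxE_def a(1) by (intro UnI1 UnI2 imageI) (simp add: a(2))
      moreover have "ata tail x \<notin> Y" using a(1) Y by simp
      moreover have "ahe head x \<in> Y" using a(1,3) by simp
      ultimately show "x \<in> IE" unfolding IE_def in_edges_def by (intro CollectI conjI)
    qed
    have h3: "g ` I2 \<subseteq> IE"
    proof
      fix x assume "x \<in> g ` I2"
      then obtain i where i: "i \<in> I2" "x = g i" by blast
      have ik: "i < k" "Some (Inr i) \<notin> Y" "Vs i \<inter> X \<noteq> {}" using i(1) unfolding I2_def by blast+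
      then obtain v0 where "v0 \<in> Vs i \<inter> X" by blast
      define v where "v = (SOME v. v \<in> Vs i \<inter> X)"
      have v: "v \<in> Vs i \<inter> X" unfolding v_def by (rule someI) fact
      have x: "x = Inr (Inr (i, v))" unfolding i(2) g_def v_def ..
      have "(i, v) \<in> {(i, v). i < k \<and> v \<in> Vs i}" using ik(1) v by blast
      then have "x \<in> E'" unfolding E'_def auxE_def x by (intro UnI2 imageI)
      moreover have "ata tail x \<notin> Y" using x ik(2) by simp
      moreover have "ahe head x \<in> Y" using x v unfolding X_def by simp
      ultimately show "x \<in> IE" unfolding IE_def in_edges_def by (intro CollectI conjI)
    qed
    have "infinite IE \<or> k \<le> card IE"
    proof (cases "finite IE")
      case True
      have fR: "finite R" using finite_subset[OF h1 True] by (simp add: finite_image_iff)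
      have injg: "inj_on g I2" by (auto simp: inj_on_def g_def)
      have f1: "finite I1" "finite I2" "finite I0" by (auto simp: I1_def I2_def I0_def)
      have "card (Inl ` R \<union> Inr ` Inl ` I1 \<union> g ` I2) \<le> card IE"
        using h1 h2 h3 True by (intro card_mono) auto
      moreover have "card (Inl ` R \<union> Inr ` Inl ` I1 \<union> g ` I2) = card R + card I1 + card I2"
      proof -
        have "card (Inl ` R \<union> Inr ` Inl ` I1 \<union> g ` I2) = card (Inl ` R \<union> Inr ` Inl ` I1 :: ('e + (nat + nat \<times> 'v)) set) + card (g ` I2)"
          using fR f1 by (intro card_Un_disjoint) (auto simp: g_def)
        also have "card (Inl ` R \<union> Inr ` Inl ` I1 :: ('e + (nat + nat \<times> 'v)) set) = card (Inl ` R :: ('e + (nat + nat \<times> 'v)) set) + card (Inr ` Inl ` I1 :: ('e + (nat + nat \<times> 'v)) set)"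
          using fR f1 by (intro card_Un_disjoint) auto
        also have "card (Inl ` R :: ('e + (nat + nat \<times> 'v)) set) = card R" by (simp add: card_image)
        also have "card (Inr ` Inl ` I1 :: ('e + (nat + nat \<times> 'v)) set) = card I1"
          by (simp add: card_image inj_on_def)
        also have "card (g ` I2) = card I2" using injg by (simp add: card_image)
        finally show ?thesis .
      qed
      moreover have "k \<le> card I0 + card I1 + card I2"
      proof -
        have "{..<k} \<subseteq> I0 \<union> I1 \<union> I2" by (auto simp: I0_def I1_def I2_def)
        then have "card {..<k} \<le> card (I0 \<union> I1 \<union> I2)" using f1 by (intro card_mono) auto
        also have "\<dots> \<le> card (I0 \<union> I1) + card I2" by (rule card_Un_le)
        also have "\<dots> \<le> card I0 + card I1 + card I2" using card_Un_le[of I0 I1] by simp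
        finally show ?thesis by simp
      qed
      ultimately show ?thesis using c fR by simp
    qed simp
    then show "infinite (in_edges (ata tail) (ahe head) E' Y) \<or> k \<le> card (in_edges (ata tail) (ahe head) E' Y)"
      unfolding IE_def .
  qed
  obtain P' where P': "\<forall>i<k. is_path (ata tail) (ahe head) W' E' (fst (P' i)) (snd (P' i)) \<and>
            hd (fst (P' i)) = None \<and> last (fst (P' i)) = t"
    "\<forall>i<k. \<forall>j<k. i \<noteq> j \<longrightarrow> set (snd (P' i)) \<inter> set (snd (P' j)) = {}"
    using menger_core[OF ends sW tW st cut'] by blast
  define Q where "Q i jQ \<longleftrightarrow> fst jQ < k \<and> snd (P' i) ! 0 = Inr (Inl (fst jQ)) \<and> snd (P' i) \<noteq> [] \<and>
     path_from_to tail head V A0 (fst (snd jQ)) (snd (snd jQ)) (Vs (fst jQ)) {w} \<and>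
     Inl ` set (snd (snd jQ)) \<subseteq> set (snd (P' i))" for i jQ
  have "\<forall>i. \<exists>jQ. i < k \<longrightarrow> Q i jQ"
  proof
    fix i
    show "\<exists>jQ. i < k \<longrightarrow> Q i jQ"
    proof (cases "i < k")
      case True
      then have "is_path (ata tail) (ahe head) (auxW k V) (auxE A0 k Vs) (fst (P' i)) (snd (P' i))"
        "hd (fst (P' i)) = None" "last (fst (P' i)) = Some (Inl w)"
        using P'(1) by (auto simp: W'_def E'_def t_def)
      from extract_path[OF this] obtain j vs0 es0 where
        "j < k" "snd (P' i) ! 0 = Inr (Inl j)" "snd (P' i) \<noteq> []"
        "path_from_to tail head V A0 vs0 es0 (Vs j) {w}" "Inl ` set es0 \<subseteq> set (snd (P' i))" by blast
      then have "Q i (j, vs0, es0)" unfolding Q_def by simp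
      then show ?thesis by blast
    qed simp
  qed
  from choice[OF this] obtain jQ where jQ0: "\<forall>i. i < k \<longrightarrow> Q i (jQ i)" by blast
  have jQ: "fst (jQ i) < k \<and> snd (P' i) ! 0 = Inr (Inl (fst (jQ i))) \<and> snd (P' i) \<noteq> [] \<and>
     path_from_to tail head V A0 (fst (snd (jQ i))) (snd (snd (jQ i))) (Vs (fst (jQ i))) {w} \<and>
     Inl ` set (snd (snd (jQ i))) \<subseteq> set (snd (P' i))" if "i < k" for i
    using jQ0 that unfolding Q_def by blast
  define \<sigma> where "\<sigma> i = fst (jQ i)" for i
  have inj: "inj_on \<sigma> {..<k}"
  proof (rule inj_onI, rule ccontr)
    fix i j assume a: "i \<in> {..<k}" "j \<in> {..<k}" "\<sigma> i = \<sigma> j" "i \<noteq> j"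
    then have "snd (P' i) ! 0 = snd (P' j) ! 0" using jQ[of i] jQ[of j] by (auto simp: \<sigma>_def)
    moreover have "snd (P' i) \<noteq> []" "snd (P' j) \<noteq> []" using jQ[of i] jQ[of j] a by auto
    then have "snd (P' i) ! 0 \<in> set (snd (P' i))" "snd (P' j) ! 0 \<in> set (snd (P' j))"
      by (simp_all add: nth_mem)
    ultimately show False using P'(2) a by auto
  qed
  have img: "\<sigma> ` {..<k} = {..<k}"
    using jQ inj by (intro endo_inj_surj) (auto simp: \<sigma>_def image_subset_iff)
  define \<tau> where "\<tau> = the_inv_into {..<k} \<sigma>"
  have tau: "\<tau> j < k \<and> \<sigma> (\<tau> j) = j" if "j < k" for j
  proof -
    have "j \<in> \<sigma> ` {..<k}" using that img by simp
    then show ?thesis unfolding \<tau>_def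
      using f_the_inv_into_f[OF inj] the_inv_into_into[OF inj _ subset_refl] by simp
  qed
  define P where "P j = snd (jQ (\<tau> j))" for j
  have "\<forall>i<k. path_from_to tail head V A0 (fst (P i)) (snd (P i)) (Vs i) {w}"
  proof (intro allI impI)
    fix i assume "i < k"
    then have "path_from_to tail head V A0 (fst (snd (jQ (\<tau> i)))) (snd (snd (jQ (\<tau> i)))) (Vs (\<sigma> (\<tau> i))) {w}"
      using jQ[of "\<tau> i"] tau[of i] unfolding \<sigma>_def by blast
    then show "path_from_to tail head V A0 (fst (P i)) (snd (P i)) (Vs i) {w}"
      using tau[OF \<open>i < k\<close>] unfolding P_def by simp
  qed
  moreover have "\<forall>i<k. \<forall>j<k. i \<noteq> j \<longrightarrow> set (snd (P i)) \<inter> set (snd (P j)) = {}"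
  proof (intro allI impI)
    fix i j assume a: "i < k" "j < k" "i \<noteq> j"
    then have ne: "\<tau> i \<noteq> \<tau> j" using tau[of i] tau[of j] by auto
    have "Inl ` set (snd (P i)) \<subseteq> set (snd (P' (\<tau> i)))" "Inl ` set (snd (P j)) \<subseteq> set (snd (P' (\<tau> j)))"
      using jQ[of "\<tau> i"] jQ[of "\<tau> j"] tau[of i] tau[of j] a unfolding P_def by auto
    moreover have "set (snd (P' (\<tau> i))) \<inter> set (snd (P' (\<tau> j))) = {}" using P'(2) tau a ne by auto
    ultimately show "set (snd (P i)) \<inter> set (snd (P j)) = {}" by blast
  qed
  ultimately show "\<exists>P :: nat \<Rightarrow> 'v list \<times> 'e list.
           (\<forall>i<k. path_from_to tail head V (A - (\<Union>i<k. As i)) (fst (P i)) (snd (P i)) (Vs i) {w}) \<and>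
           (\<forall>i<k. \<forall>j<k. i \<noteq> j \<longrightarrow> set (snd (P i)) \<inter> set (snd (P j)) = {})"
    unfolding A0_def by blast
qed

end
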